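(* Let $f,g\in\mathrm{Diff}(\mathbb{C},0)$ be distinct from the identity and suppose that $f,g$ satisfy no universal relation. Then there exists a set $\mathcal{U}\subseteq\mathrm{Diff}(\mathbb{C},0)$, dense for the analytic topology, such that for every $h\in\mathcal{U}$ the elements $f$ and $h^{-1}\circ g\circ h$ generate a free subgroup of $\mathrm{Diff}(\mathbb{C},0)$.
   Context: $\mathrm{Diff}(\mathbb{C},0)$ is the group of germs of holomorphic diffeomorphisms of $\mathbb{C}$ fixing $0$; $\widehat{\mathrm{Diff}}(\mathbb{C},0)$ is the group of formal series $\sum_{i\ge1}c_ix^i$ with $c_1\neq0$ under formal composition. For a reduced word $W(a,b)$ in $a^{\pm1},b^{\pm1}$, $W(f,g)$ denotes the element obtained by substituting $a=f,b=g$ and composing. A non-trivial reduced word $W(a,b)$ with $W(f,g)=\mathrm{id}$ is called a universal relation (for the pair $f,g$) if $W(f,\hat h^{-1}\circ g\circ\hat h)=\mathrm{id}$ for every $\hat h\in\widehat{\mathrm{Diff}}(\mathbb{C},0)$; "$f,g$ satisfy no universal relation" means no non-trivial reduced word is a universal relation. Analytic topology: for $r>0$ and $h$ holomorphic near $0$, $\|h\|_r=\sup_{B(r)}|h|$ if $h$ extends holomorphically to the open disc $B(r)$ of radius $r$, and $+\infty$ otherwise; a basis of open sets is given by $\{g:\|g-f\|_r<\varepsilon\}$, $f\in\mathrm{Diff}(\mathbb{C},0)$, $r,\varepsilon>0$. *)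

theory Defs
  imports "HOL-Analysis.Analysis"
begin

text \<open>Germs in Diff(C,0) are represented by their (convergent) Taylor series at 0;
  composition of germs is composition of power series (\<open>oo\<close>), and the
  identity is \<open>fps_X\<close>.\<close>

definition Diff0 :: "complex fps set" where
  "Diff0 = {F. fps_nth F 0 = 0 \<and> fps_nth F 1 \<noteq> 0 \<and> fps_conv_radius F > 0}"

definition FDiff0 :: "complex fps set" where
  "FDiff0 = {F. fps_nth F 0 = 0 \<and> fps_nth F 1 \<noteq> 0}"

text \<open>Letters: (is_a, is_inverse). A word is a list of letters.\<close>
type_synonym word = "(bool \<times> bool) list"

fun reduced :: "word \<Rightarrow> bool" where
  "reduced (x # y # w) = ((\<not> (fst x = fst y \<and> snd x \<noteq> snd y)) \<and> reduced (y # w))"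
| "reduced _ = True"

definition letter_eval :: "complex fps \<Rightarrow> complex fps \<Rightarrow> bool \<times> bool \<Rightarrow> complex fps" where
  "letter_eval f g l = (let u = (if fst l then f else g) in if snd l then fps_inv u else u)"

fun word_eval :: "word \<Rightarrow> complex fps \<Rightarrow> complex fps \<Rightarrow> complex fps" where
  "word_eval [] f g = fps_X"
| "word_eval (l # w) f g = letter_eval f g l oo word_eval w f g"

definition conj_by :: "complex fps \<Rightarrow> complex fps \<Rightarrow> complex fps" where
  "conj_by h g = fps_inv h oo (g oo h)"

definition universal_relation :: "word \<Rightarrow> complex fps \<Rightarrow> complex fps \<Rightarrow> bool" where
  "universal_relation W f g \<longleftrightarrow> W \<noteq> [] \<and> reduced W \<and> word_eval W f g = fps_X \<and>
     (\<forall>h\<in>FDiff0. word_eval W f (conj_by h g) = fps_X)"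

definition no_universal_relation :: "complex fps \<Rightarrow> complex fps \<Rightarrow> bool" where
  "no_universal_relation f g \<longleftrightarrow> (\<forall>W. \<not> universal_relation W f g)"

definition generate_free :: "complex fps \<Rightarrow> complex fps \<Rightarrow> bool" where
  "generate_free f k \<longleftrightarrow> (\<forall>W. W \<noteq> [] \<and> reduced W \<longrightarrow> word_eval W f k \<noteq> fps_X)"

definition extends_to :: "real \<Rightarrow> complex fps \<Rightarrow> (complex \<Rightarrow> complex) \<Rightarrow> bool" where
  "extends_to r F \<phi> \<longleftrightarrow> fps_conv_radius F > 0 \<and> \<phi> holomorphic_on ball 0 r \<and>
     (\<forall>\<^sub>F z in nhds 0. \<phi> z = eval_fps F z)"

definition anorm :: "real \<Rightarrow> complex fps \<Rightarrow> ereal" where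
  "anorm r F = (if \<exists>\<phi>. extends_to r F \<phi>
     then (SUP z\<in>ball 0 r. ereal (norm ((SOME \<phi>. extends_to r F \<phi>) z)))
     else \<infinity>)"

definition analytic_topology :: "complex fps topology" where
  "analytic_topology = topology_generated_by
     {{g\<in>Diff0. anorm r (g - f) < ereal \<epsilon>} | f r \<epsilon>. f \<in> Diff0 \<and> r > 0 \<and> \<epsilon> > 0}"

end

theory Submission imports Defs "HOL-Complex_Analysis.Complex_Analysis" begin

no_notation vec_nth (infixl \<open>$\<close> 90)



definition fconv :: "'b filter \<Rightarrow> ('b \<Rightarrow> complex fps) \<Rightarrow> complex fps \<Rightarrow> bool" where
  "fconv F A a \<longleftrightarrow> (\<forall>k. ((\<lambda>x. A x $ k) \<longlongrightarrow> a $ k) F)"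

lemma fconv_const: "fconv F (\<lambda>_. c) c"
  by (simp add: fconv_def)

lemma fconv_mult:
  assumes "fconv F A a" "fconv F B b"
  shows "fconv F (\<lambda>x. A x * B x) (a * b)"
  unfolding fconv_def fps_mult_nth
  using assms unfolding fconv_def by (auto intro!: tendsto_intros)

lemma fconv_power:
  assumes "fconv F A a"
  shows "fconv F (\<lambda>x. A x ^ i) (a ^ i)"
  by (induction i) (auto intro!: fconv_mult assms fconv_const)

lemma fconv_compose:
  assumes "fconv F A a" "fconv F B b"
  shows "fconv F (\<lambda>x. A x oo B x) (a oo b)"
proof -
  have "fconv F (\<lambda>x. B x ^ i) (b ^ i)" for i using fconv_power[OF assms(2)] .
  then show ?thesis
    unfolding fconv_def fps_compose_nth
    using assms(1) unfolding fconv_def by (auto intro!: tendsto_intros)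
qed

lemma fps_inv_nth: "fps_inv a $ n = compinv a n"
  by (simp add: fps_inv_def)

lemma fconv_inv:
  assumes "fconv F A a" "a $ 1 \<noteq> 0"
  shows "fconv F (\<lambda>x. fps_inv (A x)) (fps_inv a)"
  unfolding fconv_def fps_inv_nth
proof
  fix k
  have pw: "\<And>i j. ((\<lambda>x. (A x ^ i) $ j) \<longlongrightarrow> (a ^ i) $ j) F"
    using fconv_power[OF assms(1)] unfolding fconv_def by blast
  have a1: "((\<lambda>x. A x $ 1) \<longlongrightarrow> a $ 1) F"
    using assms(1) unfolding fconv_def by blast
  show "((\<lambda>x. compinv (A x) k) \<longlongrightarrow> compinv a k) F"
  proof (induction k rule: less_induct)
    case (less k)
    show ?case
    proof (cases k)
      case 0 then show ?thesis by simp
    next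
      case (Suc n)
      have "((\<lambda>x. compinv (A x) i) \<longlongrightarrow> compinv a i) F" if "i \<in> {0..n}" for i
        using less that Suc by auto
      then show ?thesis unfolding Suc compinv.simps
        using assms(2) pw a1 by (auto intro!: tendsto_intros)
    qed
  qed
qed

lemma compose_nth1: "(a oo b) $ 1 = a $ 1 * b $ 1"
  by (simp add: fps_compose_nth)

lemma inv_nth1: "fps_inv a $ 1 = 1 / a $ 1"
  by (simp add: fps_inv_nth)

lemma conj_nth1: "h $ 1 \<noteq> 0 \<Longrightarrow> conj_by h g $ 1 = g $ 1"
proof -
  assume h: "h $ 1 \<noteq> 0"
  have "conj_by h g $ 1 = fps_inv h $ 1 * ((g oo h) $ 1)"
    unfolding conj_by_def by (rule compose_nth1)
  also have "\<dots> = (1 / h $ 1) * (g $ 1 * h $ 1)"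
    by (simp only: compose_nth1 inv_nth1)
  also have "\<dots> = g $ 1" using h by simp
  finally show ?thesis .
qed

lemma fconv_conj:
  assumes "fconv F H h" "h $ 1 \<noteq> 0"
  shows "fconv F (\<lambda>x. conj_by (H x) g) (conj_by h g)"
  unfolding conj_by_def
  by (intro fconv_compose fconv_inv assms fconv_const)

lemma fconv_word:
  assumes "fconv F K k" "k $ 1 \<noteq> 0"
  shows "fconv F (\<lambda>x. word_eval W f (K x)) (word_eval W f k)"
proof (induction W)
  case Nil then show ?case by (simp add: fconv_const)
next
  case (Cons l W)
  have "fconv F (\<lambda>x. letter_eval f (K x) l) (letter_eval f k l)"
    unfolding letter_eval_def Let_def
    using assms by (auto intro!: fconv_const fconv_inv)
  then show ?case using Cons by (simp add: fconv_compose)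
qed


definition fhol :: "complex set \<Rightarrow> (complex \<Rightarrow> complex fps) \<Rightarrow> bool" where
  "fhol S A \<longleftrightarrow> (\<forall>k. (\<lambda>x. A x $ k) holomorphic_on S)"

lemma fhol_const: "fhol S (\<lambda>_. c)"
  by (simp add: fhol_def)

lemma fhol_mult:
  assumes "fhol S A" "fhol S B"
  shows "fhol S (\<lambda>x. A x * B x)"
  unfolding fhol_def fps_mult_nth
  using assms unfolding fhol_def by (auto intro!: holomorphic_intros)

lemma fhol_power:
  assumes "fhol S A"
  shows "fhol S (\<lambda>x. A x ^ i)"
  by (induction i) (auto intro!: fhol_mult assms fhol_const)

lemma fhol_compose:
  assumes "fhol S A" "fhol S B"
  shows "fhol S (\<lambda>x. A x oo B x)"
proof -
  have "fhol S (\<lambda>x. B x ^ i)" for i using fhol_power[OF assms(2)] .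
  then show ?thesis
    unfolding fhol_def fps_compose_nth
    using assms(1) unfolding fhol_def by (auto intro!: holomorphic_intros)
qed

lemma fhol_inv:
  assumes "fhol S A" "\<And>x. x \<in> S \<Longrightarrow> A x $ 1 \<noteq> 0"
  shows "fhol S (\<lambda>x. fps_inv (A x))"
  unfolding fhol_def fps_inv_nth
proof
  fix k
  have pw: "\<And>i j. (\<lambda>x. (A x ^ i) $ j) holomorphic_on S"
    using fhol_power[OF assms(1)] unfolding fhol_def by blast
  have a1: "(\<lambda>x. A x $ 1) holomorphic_on S"
    using assms(1) unfolding fhol_def by blast
  show "(\<lambda>x. compinv (A x) k) holomorphic_on S"
  proof (induction k rule: less_induct)
    case (less k)
    show ?case
    proof (cases k)
      case 0 then show ?thesis by simp
    next
      case (Suc n)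
      have "(\<lambda>x. compinv (A x) i) holomorphic_on S" if "i \<in> {0..n}" for i
        using less that Suc by auto
      then show ?thesis unfolding Suc compinv.simps
        using assms(2) pw a1 by (auto intro!: holomorphic_intros)
    qed
  qed
qed

lemma fhol_conj:
  assumes "fhol S H" "\<And>x. x \<in> S \<Longrightarrow> H x $ 1 \<noteq> 0"
  shows "fhol S (\<lambda>x. conj_by (H x) g)"
  unfolding conj_by_def
  by (intro fhol_compose fhol_inv assms fhol_const)

lemma fhol_word:
  assumes "fhol S K" "\<And>x. x \<in> S \<Longrightarrow> K x $ 1 \<noteq> 0"
  shows "fhol S (\<lambda>x. word_eval W f (K x))"
proof (induction W)
  case Nil then show ?case by (simp add: fhol_const)
next
  case (Cons l W)
  have "fhol S (\<lambda>x. letter_eval f (K x) l)"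
    unfolding letter_eval_def Let_def
    using assms by (cases "fst l"; cases "snd l") (auto intro!: fhol_const fhol_inv)
  then show ?case using Cons by (simp add: fhol_compose)
qed

definition agree :: "nat \<Rightarrow> complex fps \<Rightarrow> complex fps \<Rightarrow> bool" where
  "agree n a b \<longleftrightarrow> (\<forall>k\<le>n. a $ k = b $ k)"

lemma agree_mult:
  assumes "agree n a a'" "agree n b b'"
  shows "agree n (a * b) (a' * b')"
  unfolding agree_def fps_mult_nth
  using assms unfolding agree_def by (auto intro!: sum.cong)

lemma agree_refl: "agree n a a" by (simp add: agree_def)

lemma agree_power:
  assumes "agree n a a'"
  shows "agree n (a ^ i) (a' ^ i)"
  by (induction i) (auto intro!: agree_mult assms agree_refl)

lemma agree_compose:
  assumes "agree n a a'" "agree n b b'"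
  shows "agree n (a oo b) (a' oo b')"
proof -
  have "agree n (b ^ i) (b' ^ i)" for i using agree_power[OF assms(2)] .
  then show ?thesis
    unfolding agree_def fps_compose_nth
    using assms(1) unfolding agree_def by (auto intro!: sum.cong)
qed

lemma agree_inv:
  assumes "agree n a a'" "n \<ge> 1"
  shows "agree n (fps_inv a) (fps_inv a')"
  unfolding agree_def fps_inv_nth
proof (intro allI impI)
  fix k assume "k \<le> n"
  then show "compinv a k = compinv a' k"
  proof (induction k rule: less_induct)
    case (less k)
    show ?case
    proof (cases k)
      case 0 then show ?thesis by simp
    next
      case (Suc m)
      have "compinv a i = compinv a' i" if "i \<in> {0..m}" for i
        using less that Suc by auto
      moreover have "(a ^ i) $ Suc m = (a' ^ i) $ Suc m" for i
        using agree_power[OF assms(1), of i] less.prems Suc unfolding agree_def by auto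
      moreover have "a $ 1 = a' $ 1" using assms unfolding agree_def by auto
      ultimately show ?thesis unfolding Suc compinv.simps
        by (auto intro!: sum.cong)
    qed
  qed
qed

lemma agree_word:
  assumes "agree n k k'" "n \<ge> 1"
  shows "agree n (word_eval W f k) (word_eval W f k')"
proof (induction W)
  case Nil then show ?case by (simp add: agree_refl)
next
  case (Cons l W)
  have "agree n (letter_eval f k l) (letter_eval f k' l)"
    unfolding letter_eval_def Let_def
    using assms by (auto intro!: agree_refl agree_inv)
  then show ?case using Cons by (simp add: agree_compose)
qed

lemma agree_conj:
  assumes "agree n h h'" "n \<ge> 1"
  shows "agree n (conj_by h g) (conj_by h' g)"
  unfolding conj_by_def
  by (intro agree_compose agree_inv assms agree_refl)


lemma conj_by_X: "g $ 0 = 0 \<Longrightarrow> conj_by fps_X g = g"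
proof -
  assume g0: "g $ 0 = 0"
  have "fps_inv fps_X oo fps_X = (fps_X :: complex fps)" by (rule fps_inv) auto
  then have "fps_inv (fps_X :: complex fps) = fps_X" by simp
  then show ?thesis using g0 by (simp add: conj_by_def)
qed

definition valid :: "word \<Rightarrow> bool" where
  "valid W \<longleftrightarrow> W \<noteq> [] \<and> reduced W"

lemma obstruction:
  assumes "g $ 0 = 0" "no_universal_relation f g" "valid W"
  shows "\<exists>hh n. hh $ 0 = 0 \<and> hh $ 1 \<noteq> 0 \<and> word_eval W f (conj_by hh g) $ n \<noteq> fps_X $ n"
proof (cases "word_eval W f g = fps_X")
  case False
  then obtain n where "word_eval W f g $ n \<noteq> fps_X $ n" using fps_ext by blast
  then show ?thesis using conj_by_X[OF assms(1)]
    by (intro exI[of _ fps_X] exI[of _ n]) auto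
next
  case True
  then obtain hh where "hh \<in> FDiff0" "word_eval W f (conj_by hh g) \<noteq> fps_X"
    using assms(2,3) unfolding no_universal_relation_def universal_relation_def valid_def by blast
  then show ?thesis unfolding FDiff0_def using fps_ext by blast
qed

definition trunc :: "nat \<Rightarrow> complex fps \<Rightarrow> complex fps" where
  "trunc m a = Abs_fps (\<lambda>k. if k \<le> m then a $ k else 0)"

lemma step_core:
  fixes h hh :: "complex fps"
  assumes h1: "h $ 1 \<noteq> 0"
    and hh1: "hh $ 1 \<noteq> 0"
    and obs: "word_eval W f (conj_by hh g) $ n \<noteq> fps_X $ n"
    and P: "eventually P (nhds 0)"
    and g1: "g $ 1 \<noteq> 0"
  defines "E \<equiv> trunc (max n 1) hh - trunc (max n 1) h"
  shows "\<exists>t. P t \<and> (h + fps_const t * E) $ 1 \<noteq> 0 \<and>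
           word_eval W f (conj_by (h + fps_const t * E) g) $ n \<noteq> fps_X $ n"
proof (rule ccontr)
  assume contra: "\<not> ?thesis"
  define H where "H t = h + fps_const t * E" for t
  define S where "S = {t. H t $ 1 \<noteq> 0}"
  define \<Phi> where "\<Phi> t = word_eval W f (conj_by (H t) g) $ n - fps_X $ n" for t
  have Hnth: "H t $ k = h $ k + t * E $ k" for t k by (simp add: H_def)
  have contH1: "continuous_on UNIV (\<lambda>t. H t $ 1)" unfolding Hnth
    using [[show_types, show_sorts]] by (intro continuous_on_add continuous_on_mult continuous_on_const continuous_on_id)
  have openS: "open S" unfolding S_def
    by (rule open_Collect_neq[OF contH1 continuous_on_const])
  have connS: "connected S"
  proof (cases "E $ 1 = 0")
    case True then have "S = UNIV" using h1 by (auto simp: S_def Hnth)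
    then show ?thesis by (simp add: connected_UNIV)
  next
    case False
    then have "S = - {- h $ 1 / E $ 1}" by (auto simp: S_def Hnth field_simps add_eq_0_iff)
    moreover have "path_connected (- {- h $ 1 / E $ 1} :: complex set)"
      by (rule path_connected_punctured_universe) simp
    ultimately show ?thesis using path_connected_imp_connected by simp
  qed
  have "fhol S H" unfolding fhol_def Hnth by (auto intro!: holomorphic_intros)
  then have "fhol S (\<lambda>t. conj_by (H t) g)" by (rule fhol_conj) (auto simp: S_def)
  moreover have "\<And>t. t \<in> S \<Longrightarrow> conj_by (H t) g $ 1 \<noteq> 0"
    using conj_nth1 g1 by (auto simp: S_def)
  ultimately have "fhol S (\<lambda>t. word_eval W f (conj_by (H t) g))" by (rule fhol_word)
  then have holPhi: "\<Phi> holomorphic_on S" unfolding fhol_def \<Phi>_def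
    by (auto intro!: holomorphic_intros)
  have ag: "agree (max n 1) (H 1) hh"
    unfolding agree_def Hnth E_def trunc_def by simp
  have "agree (max n 1) (word_eval W f (conj_by (H 1) g)) (word_eval W f (conj_by hh g))"
    by (intro agree_word agree_conj ag) auto
  then have Phi1: "\<Phi> 1 \<noteq> 0" using obs unfolding agree_def \<Phi>_def by auto
  have 1: "1 \<in> S" unfolding S_def Hnth E_def trunc_def using hh1 by simp
  have "eventually (\<lambda>t. H t $ 1 \<noteq> 0) (nhds 0)"
    using eventually_nhds_in_open[OF openS, of 0] h1 by (simp add: S_def Hnth)
  with P have "eventually (\<lambda>t. P t \<and> H t $ 1 \<noteq> 0) (nhds 0)" by (rule eventually_conj)
  then obtain U where U: "open U" "0 \<in> U" "\<And>t. t \<in> U \<Longrightarrow> P t \<and> H t $ 1 \<noteq> 0"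
    unfolding eventually_nhds by blast
  have "\<Phi> 1 = 0"
  proof (rule analytic_continuation_open[of "U \<inter> S" S \<Phi> "\<lambda>_. 0"])
    show "open (U \<inter> S)" using U openS by auto
    show "U \<inter> S \<noteq> {}" using U by (auto simp: S_def)
    show "\<And>z. z \<in> U \<inter> S \<Longrightarrow> \<Phi> z = 0"
    proof -
      fix z assume z: "z \<in> U \<inter> S"
      then have "P z" "(h + fps_const z * E) $ 1 \<noteq> 0" using U unfolding H_def by auto
      then have "word_eval W f (conj_by (h + fps_const z * E) g) $ n = fps_X $ n"
        using contra by blast
      then show "\<Phi> z = 0" unfolding \<Phi>_def H_def by simp
    qed
  qed (use openS connS holPhi 1 in auto)
  then show False using Phi1 by simp
qed


definition wsum :: "real \<Rightarrow> nat \<Rightarrow> complex fps \<Rightarrow> real" where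
  "wsum R K D = (\<Sum>k<K. norm (D $ k) * R ^ k)"

lemma wsum_nonneg: "R \<ge> 0 \<Longrightarrow> wsum R K D \<ge> 0"
  unfolding wsum_def by (intro sum_nonneg) auto

lemma wsum_add: "R \<ge> 0 \<Longrightarrow> wsum R K (A + B) \<le> wsum R K A + wsum R K B"
  unfolding wsum_def sum.distrib[symmetric]
  by (intro sum_mono) (auto simp: distrib_right[symmetric] norm_triangle_ineq intro!: mult_right_mono)

lemma wsum_cmult: "wsum R K (fps_const t * A) = norm t * wsum R K A"
  unfolding wsum_def by (simp add: sum_distrib_left norm_mult mult.assoc)

lemma wsum_coeff:
  assumes "R \<ge> 0" "k < K"
  shows "norm (D $ k) * R ^ k \<le> wsum R K D"
  unfolding wsum_def using assms
  by (intro member_le_sum) auto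

lemma wsum_fin:
  assumes "R \<ge> 0" "\<And>k. k > N \<Longrightarrow> E $ k = 0"
  shows "wsum R K E \<le> wsum R (Suc N) E"
proof -
  have "wsum R K E = (\<Sum>k\<in>{..<K} \<inter> {..N}. norm (E $ k) * R ^ k)"
    unfolding wsum_def using assms(2)
    by (intro sum.mono_neutral_right) auto
  also have "\<dots> \<le> (\<Sum>k\<in>{..N}. norm (E $ k) * R ^ k)"
    using assms(1) by (intro sum_mono2) auto
  also have "\<dots> = wsum R (Suc N) E" unfolding wsum_def lessThan_Suc_atMost ..
  finally show ?thesis .
qed


locale L =
  fixes f g p :: "complex fps" and R \<delta> :: real
  assumes g0: "g $ 0 = 0" and g1: "g $ 1 \<noteq> 0" and nur: "no_universal_relation f g"
    and p0: "p $ 0 = 0" and p1: "p $ 1 \<noteq> 0" and Rpos: "R > 0" and dpos: "\<delta> > 0"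

context L
begin

definition HH :: "word \<Rightarrow> complex fps" where
  "HH W = (SOME hh. hh $ 0 = 0 \<and> hh $ 1 \<noteq> 0 \<and> (\<exists>n. word_eval W f (conj_by hh g) $ n \<noteq> fps_X $ n))"

definition NN :: "word \<Rightarrow> nat" where
  "NN W = (SOME n. word_eval W f (conj_by (HH W) g) $ n \<noteq> fps_X $ n)"

lemma HH_props:
  assumes "valid W"
  shows "HH W $ 0 = 0" "HH W $ 1 \<noteq> 0" "word_eval W f (conj_by (HH W) g) $ NN W \<noteq> fps_X $ NN W"
proof -
  have ex: "\<exists>hh. hh $ 0 = 0 \<and> hh $ 1 \<noteq> 0 \<and> (\<exists>n. word_eval W f (conj_by hh g) $ n \<noteq> fps_X $ n)"
    using obstruction[OF g0 nur assms] by blast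
  note s = someI_ex[OF ex, folded HH_def]
  then show "HH W $ 0 = 0" "HH W $ 1 \<noteq> 0" by auto
  from s have "\<exists>n. word_eval W f (conj_by (HH W) g) $ n \<noteq> fps_X $ n" by blast
  from someI_ex[OF this, folded NN_def]
  show "word_eval W f (conj_by (HH W) g) $ NN W \<noteq> fps_X $ NN W" .
qed

definition psi :: "word \<Rightarrow> complex fps \<Rightarrow> complex" where
  "psi W h = word_eval W f (conj_by h g) $ NN W - fps_X $ NN W"

definition wd :: "nat \<Rightarrow> word" where "wd j = from_nat j"

definition d0 :: real where "d0 = min \<delta> (norm (p $ 1) * R / 2)"

lemma d0pos: "d0 > 0" unfolding d0_def using dpos p1 Rpos by auto

definition Inv :: "nat \<Rightarrow> complex fps \<Rightarrow> (nat \<Rightarrow> real) \<Rightarrow> bool" where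
  "Inv j D m \<longleftrightarrow> D $ 0 = 0 \<and> (\<forall>K. wsum R K D \<le> d0 * (1 - (1/2)^j)) \<and>
     (\<forall>i<j. valid (wd i) \<longrightarrow> m i > 0 \<and> norm (psi (wd i) (p + D)) \<ge> m i * (1 + (1/2)^j))"

lemma small_D1:
  assumes "\<And>K. wsum R K D \<le> d0"
  shows "(p + D) $ 1 \<noteq> 0"
proof
  assume "(p + D) $ 1 = 0"
  then have e: "D $ 1 = - p $ 1" by (simp add: add_eq_0_iff)
  have "norm (D $ 1) * R ^ 1 \<le> wsum R 2 D" using Rpos by (intro wsum_coeff) auto
  also have "\<dots> \<le> d0" by (rule assms)
  also have "\<dots> \<le> norm (p $ 1) * R / 2" unfolding d0_def by simp
  finally have "norm (p $ 1) * R \<le> norm (p $ 1) * R / 2" using e by simp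
  then show False using p1 Rpos by (simp add: mult_le_0_iff)
qed

lemma Inv_D1:
  assumes "Inv j D m"
  shows "(p + D) $ 1 \<noteq> 0"
proof (rule small_D1)
  fix K
  have "wsum R K D \<le> d0 * (1 - (1/2)^j)" using assms unfolding Inv_def by blast
  also have "\<dots> \<le> d0" using d0pos by (simp add: mult_left_le)
  finally show "wsum R K D \<le> d0" .
qed

lemma pow_half_le: "(1/2::real) ^ j \<le> 1"
  by (simp add: power_le_one)

lemma step_exists:
  assumes inv: "Inv j D m"
  shows "\<exists>D' m'. Inv (Suc j) D' m' \<and> (\<forall>K. wsum R K (D' - D) \<le> d0 * (1/2)^(Suc j)) \<and> (\<forall>i<j. m' i = m i)"
proof (cases "valid (wd j)")
  case False
  have "Inv (Suc j) D m"
  proof -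
    have "D $ 0 = 0" using inv unfolding Inv_def by blast
    moreover have "wsum R K D \<le> d0 * (1 - (1/2)^Suc j)" for K
    proof -
      have "wsum R K D \<le> d0 * (1 - (1/2)^j)" using inv unfolding Inv_def by blast
      also have "\<dots> \<le> d0 * (1 - (1/2)^Suc j)" using d0pos by (intro mult_left_mono) auto
      finally show ?thesis .
    qed
    moreover have "m i > 0 \<and> norm (psi (wd i) (p + D)) \<ge> m i * (1 + (1/2)^Suc j)"
      if "i < Suc j" "valid (wd i)" for i
    proof -
      have ij: "i < j" using that False by (cases "i = j") auto
      then have mi: "m i > 0" "norm (psi (wd i) (p + D)) \<ge> m i * (1 + (1/2)^j)"
        using inv that unfolding Inv_def by auto
      have "m i * (1 + (1/2)^Suc j) \<le> m i * (1 + (1/2)^j)"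
        using mi by (intro mult_left_mono) auto
      then show ?thesis using mi by linarith
    qed
    ultimately show ?thesis unfolding Inv_def by blast
  qed
  moreover have "wsum R K (D - D) \<le> d0 * (1/2)^(Suc j)" for K
    using d0pos by (simp add: wsum_def)
  ultimately show ?thesis by blast
next
  case True
  define W where "W = wd j"
  define hh where "hh = HH W"
  define n where "n = NN W"
  define N where "N = max n 1"
  define h where "h = p + D"
  define E where "E = trunc N hh - trunc N h"
  define b where "b = d0 * (1/2)^(Suc j)"
  define \<nu> where "\<nu> = wsum R (Suc N) E"
  have bpos: "b > 0" unfolding b_def using d0pos by simp
  have vW: "valid W" using True W_def by simp
  note hhp = HH_props[OF vW, folded hh_def n_def]
  have h1: "h $ 1 \<noteq> 0" using Inv_D1[OF inv] h_def by simp
  have h0: "h $ 0 = 0" using inv p0 unfolding Inv_def h_def by simp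
  have Ezero: "E $ k = 0" if "k > N" for k using that unfolding E_def trunc_def by simp
  have E0: "E $ 0 = 0" unfolding E_def trunc_def using h0 hhp by simp
  define P where "P t \<longleftrightarrow> (\<forall>i\<in>{i. i < j \<and> valid (wd i)}.
      norm (psi (wd i) (h + fps_const t * E) - psi (wd i) h) < m i * (1/2)^(Suc j)) \<and> norm t * \<nu> < b" for t
  have evP: "eventually P (nhds 0)"
  proof -
    have id0: "((\<lambda>t. t) \<longlongrightarrow> (0::complex)) (nhds 0)" by (rule filterlim_ident)
    have "fconv (nhds 0) (\<lambda>t. h + fps_const t * E) h"
      unfolding fconv_def
    proof
      fix k
      have "((\<lambda>t. h $ k + t * E $ k) \<longlongrightarrow> h $ k + 0 * E $ k) (nhds 0)"
        by (intro tendsto_intros id0)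
      then show "((\<lambda>t. (h + fps_const t * E) $ k) \<longlongrightarrow> h $ k) (nhds 0)" by simp
    qed
    then have fc: "fconv (nhds 0) (\<lambda>t. conj_by (h + fps_const t * E) g) (conj_by h g)"
      by (rule fconv_conj) (rule h1)
    have c1: "conj_by h g $ 1 \<noteq> 0" using conj_nth1[OF h1] g1 by simp
    have ev1: "eventually (\<lambda>t. norm (psi (wd i) (h + fps_const t * E) - psi (wd i) h) < m i * (1/2)^(Suc j)) (nhds 0)"
      if "i \<in> {i. i < j \<and> valid (wd i)}" for i
    proof -
      have mi: "m i > 0" using inv that unfolding Inv_def by auto
      have "fconv (nhds 0) (\<lambda>t. word_eval (wd i) f (conj_by (h + fps_const t * E) g)) (word_eval (wd i) f (conj_by h g))"
        by (rule fconv_word[OF fc c1])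
      then have "((\<lambda>t. word_eval (wd i) f (conj_by (h + fps_const t * E) g) $ NN (wd i)) \<longlongrightarrow>
                  word_eval (wd i) f (conj_by h g) $ NN (wd i)) (nhds 0)"
        unfolding fconv_def by blast
      then have "((\<lambda>t. psi (wd i) (h + fps_const t * E)) \<longlongrightarrow> psi (wd i) h) (nhds 0)"
        unfolding psi_def by (intro tendsto_intros)
      moreover have "m i * (1/2)^(Suc j) > 0" using mi by simp
      ultimately show ?thesis unfolding tendsto_iff dist_norm by blast
    qed
    have "eventually (\<lambda>t. \<forall>i\<in>{i. i < j \<and> valid (wd i)}.
      norm (psi (wd i) (h + fps_const t * E) - psi (wd i) h) < m i * (1/2)^(Suc j)) (nhds 0)"
      by (rule eventually_ball_finite) (use ev1 in auto)
    moreover have "eventually (\<lambda>t::complex. norm t * \<nu> < b) (nhds 0)"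
    proof -
      have "((\<lambda>t::complex. norm t * \<nu>) \<longlongrightarrow> norm (0::complex) * \<nu>) (nhds 0)"
        by (rule tendsto_mult_right[OF tendsto_norm[OF id0]])
      then show ?thesis using bpos by (auto dest: order_tendstoD(2))
    qed
    ultimately show ?thesis unfolding P_def by (rule eventually_conj)
  qed
  obtain t where t: "P t" "(h + fps_const t * E) $ 1 \<noteq> 0"
    "word_eval W f (conj_by (h + fps_const t * E) g) $ n \<noteq> fps_X $ n"
    using step_core[OF h1 hhp(2) hhp(3) evP g1] unfolding E_def N_def by blast
  define D' where "D' = D + fps_const t * E"
  define m' where "m' = m(j := norm (psi W (p + D')) / 2)"
  have pD': "p + D' = h + fps_const t * E" unfolding D'_def h_def by (simp add: add.assoc)
  have psiW: "psi W (p + D') \<noteq> 0" using t(3) unfolding psi_def pD' n_def by simp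
  have wE: "wsum R K (fps_const t * E) \<le> b" for K
  proof -
    have "wsum R K (fps_const t * E) = norm t * wsum R K E" by (rule wsum_cmult)
    also have "\<dots> \<le> norm t * \<nu>" unfolding \<nu>_def
      by (intro mult_left_mono wsum_fin Ezero) (use Rpos in auto)
    also have "\<dots> \<le> b" using t(1) unfolding P_def by simp
    finally show ?thesis .
  qed
  have "Inv (Suc j) D' m'"
  proof -
    have "D' $ 0 = 0" using inv E0 unfolding Inv_def D'_def by simp
    moreover have "wsum R K D' \<le> d0 * (1 - (1/2)^Suc j)" for K
    proof -
      have "wsum R K D' \<le> wsum R K D + wsum R K (fps_const t * E)"
        unfolding D'_def using Rpos by (intro wsum_add) auto
      also have "\<dots> \<le> d0 * (1 - (1/2)^j) + b" using inv wE unfolding Inv_def by (intro add_mono) auto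
      also have "\<dots> = d0 * (1 - (1/2)^Suc j)" unfolding b_def by (simp add: algebra_simps)
      finally show ?thesis .
    qed
    moreover have "m' i > 0 \<and> norm (psi (wd i) (p + D')) \<ge> m' i * (1 + (1/2)^Suc j)"
      if "i < Suc j" "valid (wd i)" for i
    proof (cases "i = j")
      case True
      have m'i: "m' i = norm (psi W (p + D')) / 2" unfolding m'_def True by simp
      have pos: "m' i > 0" unfolding m'i using psiW by simp
      have "(1::real) + (1/2)^Suc j \<le> 2" using pow_half_le[of "Suc j"] by linarith
      then have "m' i * (1 + (1/2)^Suc j) \<le> m' i * 2" using pos by (intro mult_left_mono) auto
      also have "\<dots> = norm (psi W (p + D'))" using m'i by simp
      also have "\<dots> = norm (psi (wd i) (p + D'))" using W_def True by simp
      finally show ?thesis using pos by simp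
    next
      case False
      then have ij: "i < j" using that by simp
      then have mi: "m i > 0" "norm (psi (wd i) h) \<ge> m i * (1 + (1/2)^j)"
        using inv that unfolding Inv_def h_def by auto
      have close: "norm (psi (wd i) (p + D') - psi (wd i) h) < m i * (1/2)^(Suc j)"
        using t(1) ij that unfolding P_def pD' by auto
      have "norm (psi (wd i) h) - norm (psi (wd i) (p + D')) \<le> norm (psi (wd i) h - psi (wd i) (p + D'))"
        by (rule norm_triangle_ineq2)
      also have "\<dots> = norm (psi (wd i) (p + D') - psi (wd i) h)" by (rule norm_minus_commute)
      finally have "norm (psi (wd i) h) \<le> norm (psi (wd i) (p + D')) + norm (psi (wd i) (p + D') - psi (wd i) h)"
        by simp
      then have "norm (psi (wd i) (p + D')) \<ge> m i * (1 + (1/2)^j) - m i * (1/2)^(Suc j)"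
        using mi close by linarith
      moreover have "m i * (1 + (1/2)^j) - m i * (1/2)^(Suc j) = m i * (1 + (1/2)^Suc j)"
        by (simp add: algebra_simps)
      ultimately show ?thesis using mi ij unfolding m'_def by auto
    qed
    ultimately show ?thesis unfolding Inv_def by blast
  qed
  moreover have "\<forall>K. wsum R K (D' - D) \<le> d0 * (1/2)^(Suc j)"
    using wE unfolding D'_def b_def by simp
  moreover have "\<forall>i<j. m' i = m i" unfolding m'_def by simp
  ultimately show ?thesis by blast
qed

end


context L
begin

definition stp :: "nat \<Rightarrow> complex fps \<times> (nat \<Rightarrow> real) \<Rightarrow> complex fps \<times> (nat \<Rightarrow> real)" where
  "stp j s = (SOME s'. Inv (Suc j) (fst s') (snd s') \<and>
      (\<forall>K. wsum R K (fst s' - fst s) \<le> d0 * (1/2)^(Suc j)) \<and> (\<forall>i<j. snd s' i = snd s i))"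

primrec sq :: "nat \<Rightarrow> complex fps \<times> (nat \<Rightarrow> real)" where
  "sq 0 = (0, \<lambda>_. 1)"
| "sq (Suc j) = stp j (sq j)"

lemma stp_spec:
  assumes "Inv j (fst s) (snd s)"
  shows "Inv (Suc j) (fst (stp j s)) (snd (stp j s)) \<and>
      (\<forall>K. wsum R K (fst (stp j s) - fst s) \<le> d0 * (1/2)^(Suc j)) \<and> (\<forall>i<j. snd (stp j s) i = snd s i)"
proof -
  from step_exists[OF assms] obtain D' m' where
    "Inv (Suc j) D' m' \<and> (\<forall>K. wsum R K (D' - fst s) \<le> d0 * (1/2)^(Suc j)) \<and> (\<forall>i<j. m' i = snd s i)" by blast
  then have ex: "\<exists>s'. Inv (Suc j) (fst s') (snd s') \<and>
      (\<forall>K. wsum R K (fst s' - fst s) \<le> d0 * (1/2)^(Suc j)) \<and> (\<forall>i<j. snd s' i = snd s i)"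
    by (intro exI[of _ "(D', m')"]) auto
  show ?thesis using someI_ex[OF ex] unfolding stp_def .
qed

lemma sq_Inv: "Inv j (fst (sq j)) (snd (sq j))"
proof (induction j)
  case 0
  show ?case unfolding Inv_def by (simp add: wsum_def)
next
  case (Suc j)
  then show ?case using stp_spec[OF Suc] by simp
qed

lemma sq_props:
  "Inv j (fst (sq j)) (snd (sq j)) \<and>
   (\<forall>K. wsum R K (fst (sq (Suc j)) - fst (sq j)) \<le> d0 * (1/2)^(Suc j)) \<and>
   (\<forall>i<j. snd (sq (Suc j)) i = snd (sq j) i)"
  using sq_Inv[of j] stp_spec[OF sq_Inv[of j]] by simp

definition Ds :: "nat \<Rightarrow> complex fps" where "Ds j = fst (sq j)"
definition ms :: "nat \<Rightarrow> nat \<Rightarrow> real" where "ms j = snd (sq j)"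
definition Dl :: "nat \<Rightarrow> complex fps" where "Dl j = Ds (Suc j) - Ds j"

lemma Dl_bound: "norm (Dl j $ k) \<le> d0 / R ^ k * (1/2)^(Suc j)"
proof -
  have "norm (Dl j $ k) * R ^ k \<le> wsum R (Suc k) (Dl j)" using Rpos by (intro wsum_coeff) auto
  also have "\<dots> \<le> d0 * (1/2)^(Suc j)" using sq_props[of j] unfolding Dl_def Ds_def by blast
  finally show ?thesis using Rpos by (simp add: field_simps)
qed

lemma Ds_sum: "Ds j $ k = (\<Sum>i<j. Dl i $ k)"
  by (induction j) (auto simp: Ds_def Dl_def)

lemma Dl_summable: "summable (\<lambda>i. Dl i $ k)"
proof (rule summable_comparison_test)
  show "\<exists>N. \<forall>n\<ge>N. norm (Dl n $ k) \<le> d0 / R ^ k * (1/2)^(Suc n)" using Dl_bound by blast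
  show "summable (\<lambda>n. d0 / R ^ k * (1/2::real)^(Suc n))"
    by (intro summable_mult summable_mult2 summable_geometric[THEN summable_Suc_iff[THEN iffD2]]) simp
qed

definition Dlim :: "complex fps" where "Dlim = Abs_fps (\<lambda>k. \<Sum>i. Dl i $ k)"

lemma Ds_lim: "(\<lambda>j. Ds j $ k) \<longlonglongrightarrow> Dlim $ k"
  unfolding Ds_sum Dlim_def using summable_LIMSEQ[OF Dl_summable] by simp

lemma Inv_Ds: "Inv j (Ds j) (ms j)"
  using sq_props[of j] unfolding Ds_def ms_def by blast

lemma wsum_Dlim: "wsum R K Dlim \<le> d0"
proof -
  have "(\<lambda>j. wsum R K (Ds j)) \<longlonglongrightarrow> wsum R K Dlim"
    unfolding wsum_def by (intro tendsto_intros Ds_lim)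
  moreover have "wsum R K (Ds j) \<le> d0" for j
  proof -
    have "wsum R K (Ds j) \<le> d0 * (1 - (1/2)^j)" using Inv_Ds[of j] unfolding Inv_def by blast
    also have "\<dots> \<le> d0" using d0pos by (simp add: mult_left_le)
    finally show ?thesis .
  qed
  ultimately show ?thesis by (intro LIMSEQ_le_const2) auto
qed

lemma ms_stable: "j \<ge> Suc i \<Longrightarrow> ms j i = ms (Suc i) i"
proof (induction j rule: dec_induct)
  case base then show ?case by simp
next
  case (step j)
  then have "ms (Suc j) i = ms j i" using sq_props[of j] unfolding ms_def by auto
  then show ?case using step by simp
qed

lemma Dlim0: "Dlim $ 0 = 0"
proof -
  have "Ds j $ 0 = 0" for j using Inv_Ds[of j] unfolding Inv_def by blast
  then have "(\<lambda>j. Ds j $ 0) \<longlonglongrightarrow> 0" by simp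
  then show ?thesis using Ds_lim[of 0] LIMSEQ_unique by blast
qed

lemma Dlim1: "(p + Dlim) $ 1 \<noteq> 0"
  by (rule small_D1) (rule wsum_Dlim)

lemma Dlim_free:
  assumes "valid W"
  shows "word_eval W f (conj_by (p + Dlim) g) \<noteq> fps_X"
proof -
  define i where "i = to_nat W"
  have Wi: "wd i = W" unfolding wd_def i_def by simp
  define M where "M = ms (Suc i) i"
  have Mge: "M > 0 \<and> norm (psi W (p + Ds j)) \<ge> M" if "j \<ge> Suc i" for j
  proof -
    have "ms j i > 0 \<and> norm (psi (wd i) (p + Ds j)) \<ge> ms j i * (1 + (1/2)^j)"
      using Inv_Ds[of j] that assms Wi unfolding Inv_def by auto
    moreover have "ms j i = M" using ms_stable[OF that] M_def by simp
    moreover have "ms j i * 1 \<le> ms j i * (1 + (1/2)^j)" if "ms j i > 0" using that by (intro mult_left_mono) auto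
    ultimately show ?thesis using Wi by (metis mult.right_neutral order_trans)
  qed
  have fc: "fconv sequentially (\<lambda>j. p + Ds j) (p + Dlim)"
    unfolding fconv_def by (auto intro!: tendsto_intros Ds_lim)
  have "fconv sequentially (\<lambda>j. conj_by (p + Ds j) g) (conj_by (p + Dlim) g)"
    by (rule fconv_conj[OF fc Dlim1])
  moreover have "conj_by (p + Dlim) g $ 1 \<noteq> 0" using conj_nth1[OF Dlim1] g1 by simp
  ultimately have "fconv sequentially (\<lambda>j. word_eval W f (conj_by (p + Ds j) g)) (word_eval W f (conj_by (p + Dlim) g))"
    by (rule fconv_word)
  then have "(\<lambda>j. psi W (p + Ds j)) \<longlonglongrightarrow> psi W (p + Dlim)"
    unfolding psi_def fconv_def by (intro tendsto_intros) blast
  then have "(\<lambda>j. norm (psi W (p + Ds j))) \<longlonglongrightarrow> norm (psi W (p + Dlim))"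
    by (rule tendsto_norm)
  then have "M \<le> norm (psi W (p + Dlim))"
    by (rule LIMSEQ_le_const) (use Mge in blast)
  moreover have "M > 0" using Mge[of "Suc i"] by simp
  ultimately have "psi W (p + Dlim) \<noteq> 0" by auto
  then show ?thesis unfolding psi_def by auto
qed

lemma Dlim_summable: "summable (\<lambda>k. norm (Dlim $ k) * R ^ k)" "(\<Sum>k. norm (Dlim $ k) * R ^ k) \<le> \<delta>"
proof -
  have b: "(\<Sum>k\<le>n. norm (Dlim $ k) * R ^ k) \<le> d0" for n
    using wsum_Dlim[of "Suc n"] unfolding wsum_def lessThan_Suc_atMost .
  show s: "summable (\<lambda>k. norm (Dlim $ k) * R ^ k)"
    by (rule bounded_imp_summable[OF _ b]) (use Rpos in auto)
  have "(\<Sum>k. norm (Dlim $ k) * R ^ k) \<le> d0"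
    by (rule suminf_le_const[OF s]) (use wsum_Dlim in \<open>auto simp: wsum_def\<close>)
  then show "(\<Sum>k. norm (Dlim $ k) * R ^ k) \<le> \<delta>" unfolding d0_def by linarith
qed

end


lemma conv_radius_from_w:
  fixes D :: "complex fps"
  assumes "summable (\<lambda>k. norm (D $ k) * R ^ k)" "R \<ge> 0"
  shows "fps_conv_radius D \<ge> ereal R"
proof -
  have "summable (\<lambda>k. D $ k * (complex_of_real R) ^ k)"
    by (rule summable_norm_cancel) (use assms in \<open>simp add: norm_mult norm_power\<close>)
  from conv_radius_geI[OF this] show ?thesis using assms(2) by (simp add: fps_conv_radius_def)
qed

lemma w_mono:
  fixes D :: "complex fps"
  assumes "summable (\<lambda>k. norm (D $ k) * R ^ k)" "0 \<le> r" "r \<le> R"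
  shows "summable (\<lambda>k. norm (D $ k) * r ^ k)" "(\<Sum>k. norm (D $ k) * r ^ k) \<le> (\<Sum>k. norm (D $ k) * R ^ k)"
proof -
  have le: "norm (D $ k) * r ^ k \<le> norm (D $ k) * R ^ k" for k
    using assms by (intro mult_left_mono power_mono) auto
  show s: "summable (\<lambda>k. norm (D $ k) * r ^ k)"
    by (rule summable_comparison_test'[OF assms(1)]) (use le assms(2) in auto)
  show "(\<Sum>k. norm (D $ k) * r ^ k) \<le> (\<Sum>k. norm (D $ k) * R ^ k)"
    by (rule suminf_le[OF le s assms(1)])
qed

lemma eval_bound:
  fixes D :: "complex fps"
  assumes "summable (\<lambda>k. norm (D $ k) * r ^ k)" "norm z < r"
  shows "norm (eval_fps D z) \<le> (\<Sum>k. norm (D $ k) * r ^ k)"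
proof -
  have le: "norm (D $ k * z ^ k) \<le> norm (D $ k) * r ^ k" for k
    using assms by (auto simp: norm_mult norm_power intro!: mult_left_mono power_mono)
  have s: "summable (\<lambda>k. norm (D $ k * z ^ k))"
    by (rule summable_comparison_test'[OF assms(1)]) (use le in auto)
  have "norm (eval_fps D z) \<le> (\<Sum>k. norm (D $ k * z ^ k))"
    unfolding eval_fps_def by (rule summable_norm[OF s])
  also have "\<dots> \<le> (\<Sum>k. norm (D $ k) * r ^ k)"
    by (rule suminf_le[OF le s assms(1)])
  finally show ?thesis .
qed

lemma extends_unique:
  fixes z :: complex
  assumes "extends_to r F \<phi>" "extends_to r F \<phi>'" "z \<in> ball 0 r"
  shows "\<phi> z = \<phi>' z"
proof -
  have "eventually (\<lambda>z. \<phi> z = eval_fps F z) (nhds 0)" "eventually (\<lambda>z. \<phi>' z = eval_fps F z) (nhds 0)"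
    using assms unfolding extends_to_def by auto
  then have "eventually (\<lambda>z. \<phi> z = \<phi>' z) (nhds 0)" by (auto elim: eventually_elim2)
  then obtain U where U: "open U" "0 \<in> U" "\<And>z. z \<in> U \<Longrightarrow> \<phi> z = \<phi>' z"
    unfolding eventually_nhds by blast
  have r: "r > 0" using assms(3) by (auto simp: dist_norm) (smt (verit) norm_ge_zero)
  show ?thesis
  proof (rule analytic_continuation_open[of "U \<inter> ball 0 r" "ball 0 r" \<phi> \<phi>' z])
    show "U \<inter> ball 0 r \<noteq> {}" using U r by auto
  qed (use U assms in \<open>auto simp: extends_to_def\<close>)
qed

lemma basic_nbhd:
  fixes p f0 :: "complex fps"
  assumes r: "r > 0" and an: "anorm r (p - f0) < ereal \<epsilon>"
  shows "\<exists>\<delta>>0. \<forall>D::complex fps. summable (\<lambda>k. norm (D $ k) * r ^ k) \<and> (\<Sum>k. norm (D $ k) * r ^ k) \<le> \<delta> \<longrightarrow>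
           anorm r (p + D - f0) < ereal \<epsilon>"
proof -
  define A where "A = p - f0"
  have exA: "\<exists>\<phi>. extends_to r A \<phi>"
    using an unfolding A_def anorm_def by (cases "\<exists>\<phi>. extends_to r (p - f0) \<phi>") auto
  define \<psi> where "\<psi> = (SOME \<phi>. extends_to r A \<phi>)"
  have ext\<psi>: "extends_to r A \<psi>" using someI_ex[OF exA] unfolding \<psi>_def .
  define S where "S = (SUP z\<in>ball 0 r. ereal (norm (\<psi> z)))"
  have anA: "anorm r A = S" using exA unfolding anorm_def S_def \<psi>_def by simp
  have S0: "S \<ge> 0" unfolding S_def using r
    by (intro SUP_upper2[of 0]) auto
  have Sfin: "S < ereal \<epsilon>" using an anA A_def by simp
  obtain s where s: "S = ereal s" using S0 Sfin by (cases S) auto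
  have sle: "norm (\<psi> z) \<le> s" if "z \<in> ball 0 r" for z
  proof -
    have "ereal (norm (\<psi> z)) \<le> S" unfolding S_def by (rule SUP_upper[OF that])
    then show ?thesis using s by simp
  qed
  define \<delta> where "\<delta> = (\<epsilon> - s) / 2"
  have dpos: "\<delta> > 0" using Sfin s unfolding \<delta>_def by simp
  show ?thesis
  proof (intro exI[of _ \<delta>] conjI allI impI dpos)
    fix D :: "complex fps" assume D: "summable (\<lambda>k. norm (D $ k) * r ^ k) \<and> (\<Sum>k. norm (D $ k) * r ^ k) \<le> \<delta>"
    define B where "B = A + D"
    have BD: "p + D - f0 = B" unfolding B_def A_def by (simp add: algebra_simps)
    have cD: "fps_conv_radius D \<ge> ereal r" using conv_radius_from_w[of D r] D r by auto
    have cA: "fps_conv_radius A > 0" using ext\<psi> unfolding extends_to_def by blast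
    have cB: "fps_conv_radius B > 0" unfolding B_def
      using fps_conv_radius_add[of A D] cA cD r
      by (metis (no_types, lifting) ereal_less(2) less_eq_ereal_def min_less_iff_conj order.strict_trans2 order_less_le_trans)
    define \<phi>B where "\<phi>B z = \<psi> z + eval_fps D z" for z
    have holD: "eval_fps D holomorphic_on ball 0 r"
    proof (rule holomorphic_on_eval_fps, rule subsetI)
      fix x :: complex assume "x \<in> ball 0 r"
      then have "ereal (norm x) < ereal r" by (simp add: dist_norm)
      then have "ereal (norm x) < fps_conv_radius D" using cD by (rule order_less_le_trans)
      then show "x \<in> eball 0 (fps_conv_radius D)" by (simp add: dist_norm)
    qed
    have extB: "extends_to r B \<phi>B"
      unfolding extends_to_def
    proof (intro conjI cB)
      show "\<phi>B holomorphic_on ball 0 r" unfolding \<phi>B_def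
        using ext\<psi> holD unfolding extends_to_def by (auto intro!: holomorphic_intros)
      define \<rho> where "\<rho> = min (fps_conv_radius A) (ereal r)"
      have \<rho>: "\<rho> > 0" unfolding \<rho>_def using cA r by auto
      have "eventually (\<lambda>z. z \<in> eball 0 \<rho>) (nhds (0::complex))"
        by (rule eventually_nhds_in_open) (use \<rho> in \<open>auto simp: zero_ereal_def\<close>)
      moreover have "eventually (\<lambda>z. \<psi> z = eval_fps A z) (nhds 0)"
        using ext\<psi> unfolding extends_to_def by blast
      ultimately show "eventually (\<lambda>z. \<phi>B z = eval_fps B z) (nhds 0)"
      proof eventually_elim
        case (elim z)
        then have zA: "ereal (norm z) < fps_conv_radius A" and zr: "ereal (norm z) < ereal r"
          unfolding \<rho>_def by (auto simp: dist_norm)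
        have "ereal (norm z) < fps_conv_radius D" using zr cD by (rule order_less_le_trans)
        note zA this
        then show ?case unfolding \<phi>B_def B_def using elim by (simp add: eval_fps_add)
      qed
    qed
    have exB: "\<exists>\<phi>. extends_to r B \<phi>" using extB by blast
    define \<psi>B where "\<psi>B = (SOME \<phi>. extends_to r B \<phi>)"
    have ext\<psi>B: "extends_to r B \<psi>B" using someI_ex[OF exB] unfolding \<psi>B_def .
    have "anorm r B = (SUP z\<in>ball 0 r. ereal (norm (\<psi>B z)))"
      using exB unfolding anorm_def \<psi>B_def by simp
    also have "\<dots> \<le> ereal (s + \<delta>)"
    proof (rule SUP_least)
      fix z :: complex assume z: "z \<in> ball 0 r"
      have "\<psi>B z = \<phi>B z" by (rule extends_unique[OF ext\<psi>B extB z])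
      then have "norm (\<psi>B z) \<le> norm (\<psi> z) + norm (eval_fps D z)"
        unfolding \<phi>B_def by (simp add: norm_triangle_ineq)
      also have "\<dots> \<le> s + \<delta>"
      proof (intro add_mono sle z)
        have "norm z < r" using z by (simp add: dist_norm)
        then have "norm (eval_fps D z) \<le> (\<Sum>k. norm (D $ k) * r ^ k)" using D by (intro eval_bound) auto
        then show "norm (eval_fps D z) \<le> \<delta>" using D by linarith
      qed
      finally show "ereal (norm (\<psi>B z)) \<le> ereal (s + \<delta>)" by simp
    qed
    also have "\<dots> < ereal \<epsilon>"
    proof -
      have "s < \<epsilon>" using Sfin s by simp
      then have "s + (\<epsilon> - s) / 2 < \<epsilon>" by (simp add: field_simps)
      then show ?thesis unfolding \<delta>_def by simp
    qed
    finally show "anorm r (p + D - f0) < ereal \<epsilon>" unfolding BD .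
  qed
qed


definition Nb :: "complex fps set \<Rightarrow> complex fps \<Rightarrow> bool" where
  "Nb T p \<longleftrightarrow> (\<exists>R>0. \<exists>\<delta>>0. \<forall>D. p + D \<in> Diff0 \<and> summable (\<lambda>k. norm (D $ k) * R ^ k) \<and>
       (\<Sum>k. norm (D $ k) * R ^ k) \<le> \<delta> \<longrightarrow> p + D \<in> T)"

lemma Nb_mono:
  assumes "T \<subseteq> T'" "Nb T p"
  shows "Nb T' p"
proof -
  from assms(2) obtain R \<delta> where R: "R > 0" "\<delta> > 0" and
    H: "\<forall>D. p + D \<in> Diff0 \<and> summable (\<lambda>k. norm (D $ k) * R ^ k) \<and>
       (\<Sum>k. norm (D $ k) * R ^ k) \<le> \<delta> \<longrightarrow> p + D \<in> T"
    using assms(2) unfolding Nb_def by metis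
  show ?thesis unfolding Nb_def
  proof (rule exI[of _ R], rule conjI[OF R(1)], rule exI[of _ \<delta>], rule conjI[OF R(2)], intro allI impI)
    fix D assume "p + D \<in> Diff0 \<and> summable (\<lambda>k. norm (D $ k) * R ^ k) \<and>
       (\<Sum>k. norm (D $ k) * R ^ k) \<le> \<delta>"
    then have "p + D \<in> T" using H by blast
    then show "p + D \<in> T'" using assms(1) by blast
  qed
qed

lemma Nb_gen:
  assumes "generate_topology_on
     {{g\<in>Diff0. anorm r (g - f) < ereal \<epsilon>} | f r \<epsilon>. f \<in> Diff0 \<and> r > 0 \<and> \<epsilon> > 0} T"
  shows "p \<in> T \<Longrightarrow> Nb T p"
  using assms
proof (induction arbitrary: p rule: generate_topology_on.induct)
  case Empty then show ?case by simp
next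
  case (Int a b)
  obtain R1 d1 where 1: "R1 > 0" "d1 > 0" "\<And>D. p + D \<in> Diff0 \<and> summable (\<lambda>k. norm (D $ k) * R1 ^ k) \<and>
       (\<Sum>k. norm (D $ k) * R1 ^ k) \<le> d1 \<Longrightarrow> p + D \<in> a"
  proof -
    have "p \<in> a" using Int.prems by simp
    then have "Nb a p" by (rule Int.IH(1))
    then show ?thesis using that unfolding Nb_def by metis
  qed
  obtain R2 d2 where 2: "R2 > 0" "d2 > 0" "\<And>D. p + D \<in> Diff0 \<and> summable (\<lambda>k. norm (D $ k) * R2 ^ k) \<and>
       (\<Sum>k. norm (D $ k) * R2 ^ k) \<le> d2 \<Longrightarrow> p + D \<in> b"
  proof -
    have "p \<in> b" using Int.prems by simp
    then have "Nb b p" by (rule Int.IH(2))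
    then show ?thesis using that unfolding Nb_def by metis
  qed
  show ?case unfolding Nb_def
  proof (rule exI[of _ "max R1 R2"], intro conjI exI[of _ "min d1 d2"] allI impI)
    show "0 < max R1 R2" using 1 2 by auto
    show "0 < min d1 d2" using 1 2 by auto
    fix D :: "complex fps"
    assume D: "p + D \<in> Diff0 \<and> summable (\<lambda>k. norm (D $ k) * max R1 R2 ^ k) \<and>
       (\<Sum>k. norm (D $ k) * max R1 R2 ^ k) \<le> min d1 d2"
    have "p + D \<in> a"
    proof (rule 1(3), intro conjI)
      note w = w_mono[of D "max R1 R2" R1]
      show "summable (\<lambda>k. norm (D $ k) * R1 ^ k)" using w 1 D by auto
      show "(\<Sum>k. norm (D $ k) * R1 ^ k) \<le> d1" using w 1 D by force
    qed (use D in auto)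
    moreover have "p + D \<in> b"
    proof (rule 2(3), intro conjI)
      note w = w_mono[of D "max R1 R2" R2]
      show "summable (\<lambda>k. norm (D $ k) * R2 ^ k)" using w 2 D by auto
      show "(\<Sum>k. norm (D $ k) * R2 ^ k) \<le> d2" using w 2 D by force
    qed (use D in auto)
    ultimately show "p + D \<in> a \<inter> b" by simp
  qed
next
  case (UN K)
  then obtain k where "k \<in> K" "p \<in> k" by blast
  then have "Nb k p" using UN by blast
  then show ?case using \<open>k \<in> K\<close> Nb_mono[of k "\<Union>K" p] by blast
next
  case (Basis s)
  then obtain f0 r \<epsilon> where s: "s = {g\<in>Diff0. anorm r (g - f0) < ereal \<epsilon>}" "r > 0" "\<epsilon> > 0"
    by blast
  then have pin: "anorm r (p - f0) < ereal \<epsilon>" using Basis.prems by simp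
  obtain \<delta> where d: "\<delta> > 0" "\<And>D. summable (\<lambda>k. norm (D $ k) * r ^ k) \<and> (\<Sum>k. norm (D $ k) * r ^ k) \<le> \<delta> \<Longrightarrow>
           anorm r (p + D - f0) < ereal \<epsilon>"
    using basic_nbhd[OF s(2) pin] by metis
  show ?case unfolding Nb_def
    by (rule exI[of _ r], intro exI[of _ \<delta>] conjI allI impI s d) (use d s in auto)
qed

theorem theorem2p6:
  fixes f g :: "complex fps"
  assumes "f \<in> Diff0" and "g \<in> Diff0"
    and "f \<noteq> fps_X" and "g \<noteq> fps_X"
    and "no_universal_relation f g"
  shows "\<exists>U. U \<subseteq> Diff0 \<and> analytic_topology closure_of U = topspace analytic_topology \<and>
           (\<forall>h\<in>U. generate_free f (conj_by h g))"
proof (intro exI[of _ "{h\<in>Diff0. generate_free f (conj_by h g)}"] conjI)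
  show "{h\<in>Diff0. generate_free f (conj_by h g)} \<subseteq> Diff0" by blast
  show "\<forall>h\<in>{h\<in>Diff0. generate_free f (conj_by h g)}. generate_free f (conj_by h g)" by blast
  show "analytic_topology closure_of {h\<in>Diff0. generate_free f (conj_by h g)} = topspace analytic_topology"
    unfolding dense_intersects_open
  proof (intro allI impI)
    fix T assume T: "openin analytic_topology T \<and> T \<noteq> {}"
    then obtain p where pT: "p \<in> T" by blast
    have gen: "generate_topology_on
     {{g\<in>Diff0. anorm r (g - f) < ereal \<epsilon>} | f r \<epsilon>. f \<in> Diff0 \<and> r > 0 \<and> \<epsilon> > 0} T"
      using T unfolding analytic_topology_def openin_topology_generated_by_iff by blast
    have "T \<subseteq> topspace analytic_topology" using T openin_subset by blast
    then have pD: "p \<in> Diff0" using pT unfolding analytic_topology_def by auto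
    obtain R \<delta> where Rd: "R > 0" "\<delta> > 0" "\<And>D. p + D \<in> Diff0 \<and> summable (\<lambda>k. norm (D $ k) * R ^ k) \<and>
       (\<Sum>k. norm (D $ k) * R ^ k) \<le> \<delta> \<Longrightarrow> p + D \<in> T"
    proof -
      have "Nb T p" by (rule Nb_gen[OF gen pT])
      then show ?thesis using that unfolding Nb_def by metis
    qed
    have LL: "L f g p R \<delta>"
      unfolding L_def using assms pD Rd unfolding Diff0_def by auto
    define D where "D = L.Dlim f g p R \<delta>"
    have D0: "D $ 0 = 0" unfolding D_def by (rule L.Dlim0[OF LL])
    have D1: "(p + D) $ 1 \<noteq> 0" unfolding D_def by (rule L.Dlim1[OF LL])
    have Ds: "summable (\<lambda>k. norm (D $ k) * R ^ k)" "(\<Sum>k. norm (D $ k) * R ^ k) \<le> \<delta>"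
      unfolding D_def using L.Dlim_summable[OF LL] by auto
    have cD: "fps_conv_radius D \<ge> ereal R" using conv_radius_from_w[OF Ds(1)] Rd by simp
    have cp: "fps_conv_radius p > 0" using pD unfolding Diff0_def by blast
    have "fps_conv_radius (p + D) > 0"
    proof -
      have "min (fps_conv_radius p) (fps_conv_radius D) > 0" using cp cD Rd
        by (metis ereal_less(2) min_less_iff_conj order_less_le_trans)
      then show ?thesis using fps_conv_radius_add[of p D] by (rule order_less_le_trans)
    qed
    then have pDD: "p + D \<in> Diff0" using pD D0 D1 unfolding Diff0_def by auto
    have free: "generate_free f (conj_by (p + D) g)"
      unfolding generate_free_def D_def
      using L.Dlim_free[OF LL] unfolding valid_def by blast
    have "p + D \<in> T" using Rd(3)[of D] pDD Ds by blast
    then show "{h\<in>Diff0. generate_free f (conj_by h g)} \<inter> T \<noteq> {}" using pDD free by blast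
  qed
qed

end
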